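(* There is a constant $c$ such that the following holds. Let $L\subseteq\{a\}^*$ be a unary star-free language accepted by an NFA with $n$ states. Then there is a number $N\leq c\,n^2$ such that $a^N\in L$ if and only if $a^{N+k}\in L$ for all $k\in\mathbb{N}_{\geq 0}$.
   Context: Star-free languages are those obtained from finite languages by finitely many applications of union, concatenation and complement (in $\{a\}^*$). NFAs have one initial state and no $\varepsilon$-transitions. *)

theory Defs
  imports Complex_Main
begin

text \<open>Unary alphabet: the single letter a is the unit value; words over {a} are unit lists,
  so a^N is replicate N (). Languages are sets of unit lists; UNIV is {a}*.\<close>

type_synonym uword = "unit list"

definition lconc :: "uword set \<Rightarrow> uword set \<Rightarrow> uword set" where
  "lconc A B = {u @ v | u v. u \<in> A \<and> v \<in> B}"

inductive_set star_free :: "uword set set" where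
  sf_finite: "finite A \<Longrightarrow> A \<in> star_free"
| sf_union: "A \<in> star_free \<Longrightarrow> B \<in> star_free \<Longrightarrow> A \<union> B \<in> star_free"
| sf_conc: "A \<in> star_free \<Longrightarrow> B \<in> star_free \<Longrightarrow> lconc A B \<in> star_free"
| sf_compl: "A \<in> star_free \<Longrightarrow> - A \<in> star_free"

inductive nfa_path :: "(nat \<Rightarrow> unit \<Rightarrow> nat \<Rightarrow> bool) \<Rightarrow> nat \<Rightarrow> uword \<Rightarrow> nat \<Rightarrow> bool"
  for delta where
  path_nil: "nfa_path delta q [] q"
| path_cons: "delta q x p \<Longrightarrow> nfa_path delta p w r \<Longrightarrow> nfa_path delta q (x # w) r"

definition is_nfa :: "nat set \<Rightarrow> nat \<Rightarrow> (nat \<Rightarrow> unit \<Rightarrow> nat \<Rightarrow> bool) \<Rightarrow> nat set \<Rightarrow> bool" where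
  "is_nfa Q q0 delta F \<longleftrightarrow> finite Q \<and> q0 \<in> Q \<and> F \<subseteq> Q \<and>
     (\<forall>q x p. delta q x p \<longrightarrow> q \<in> Q \<and> p \<in> Q)"

definition nfa_lang :: "nat \<Rightarrow> (nat \<Rightarrow> unit \<Rightarrow> nat \<Rightarrow> bool) \<Rightarrow> nat set \<Rightarrow> uword set" where
  "nfa_lang q0 delta F = {w. \<exists>f\<in>F. nfa_path delta q0 w f}"

end

theory Submission imports Defs begin

lemma unit_list_eq: "(w::unit list) = replicate (length w) ()"
  by (induct w) auto

lemma unit_list_inj: "length (u::unit list) = length v \<Longrightarrow> u = v"
  by (metis unit_list_eq)

definition cof :: "uword set \<Rightarrow> bool" where "cof A \<longleftrightarrow> (\<exists>M. \<forall>w. M \<le> length w \<longrightarrow> w \<in> A)"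
definition fin :: "uword set \<Rightarrow> bool" where "fin A \<longleftrightarrow> (\<exists>M. \<forall>w\<in>A. length w < M)"

lemma finite_fin: "finite A \<Longrightarrow> fin A"
proof -
  assume "finite A"
  then have "finite (length ` A)" by simp
  then obtain M where "\<forall>x\<in>length ` A. x < M" using finite_nat_set_iff_bounded by blast
  then show ?thesis unfolding fin_def by auto
qed

lemma sf_fin_cof: "A \<in> star_free \<Longrightarrow> fin A \<or> cof A"
proof (induction rule: star_free.induct)
  case (sf_finite A)
  then show ?case using finite_fin by blast
next
  case (sf_union A B)
  show ?case
  proof (cases "cof A \<or> cof B")
    case True
    then show ?thesis unfolding cof_def by blast
  next
    case False
    then have "fin A" "fin B" using sf_union by auto
    then obtain M1 M2 where "\<forall>w\<in>A. length w < M1" "\<forall>w\<in>B. length w < M2" unfolding fin_def by auto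
    then have "\<forall>w\<in>A \<union> B. length w < M1 + M2" by auto
    then show ?thesis unfolding fin_def by blast
  qed
next
  case (sf_compl A)
  from sf_compl.IH show ?case
  proof
    assume "fin A"
    then obtain M where "\<forall>w\<in>A. length w < M" unfolding fin_def by auto
    then have "\<forall>w. M \<le> length w \<longrightarrow> w \<in> - A" by force
    then have "cof (- A)" unfolding cof_def by blast
    then show ?thesis ..
  next
    assume "cof A"
    then obtain M where "\<forall>w. M \<le> length w \<longrightarrow> w \<in> A" unfolding cof_def by auto
    then have "\<forall>w\<in>- A. length w < M" by (auto simp: not_le[symmetric])
    then have "fin (- A)" unfolding fin_def by blast
    then show ?thesis ..
  qed
next
  case (sf_conc A B)
  show ?case
  proof (cases "A = {} \<or> B = {}")
    case True
    then have "lconc A B = {}" unfolding lconc_def by auto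
    then show ?thesis unfolding fin_def by auto
  next
    case False
    then obtain u v where uv: "u \<in> A" "v \<in> B" by auto
    show ?thesis
    proof (cases "cof A")
      case True
      then obtain M where M: "\<forall>w. M \<le> length w \<longrightarrow> w \<in> A" unfolding cof_def by auto
      have "\<forall>w. M + length v \<le> length w \<longrightarrow> w \<in> lconc A B"
      proof (intro allI impI)
        fix w :: uword assume "M + length v \<le> length w"
        let ?x = "replicate (length w - length v) ()"
        have "?x \<in> A" using M \<open>M + length v \<le> length w\<close> by simp
        moreover have "?x @ v = w" by (rule unit_list_inj) (use \<open>M + length v \<le> length w\<close> in simp)
        ultimately show "w \<in> lconc A B" unfolding lconc_def
          by (intro CollectI exI[of _ ?x] exI[of _ v]) (use uv(2) in simp)
      qed
      then show ?thesis unfolding cof_def by blast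
    next
      case nA: False
      show ?thesis
      proof (cases "cof B")
        case True
        then obtain M where M: "\<forall>w. M \<le> length w \<longrightarrow> w \<in> B" unfolding cof_def by auto
        have "\<forall>w. M + length u \<le> length w \<longrightarrow> w \<in> lconc A B"
        proof (intro allI impI)
          fix w :: uword assume "M + length u \<le> length w"
          let ?x = "replicate (length w - length u) ()"
          have "?x \<in> B" using M \<open>M + length u \<le> length w\<close> by simp
          moreover have "u @ ?x = w" by (rule unit_list_inj) (use \<open>M + length u \<le> length w\<close> in simp)
          ultimately show "w \<in> lconc A B" unfolding lconc_def
            by (intro CollectI exI[of _ u] exI[of _ ?x]) (use uv(1) in simp)
        qed
        then show ?thesis unfolding cof_def by blast
      next
        case False
        then have "fin A" "fin B" using sf_conc nA by auto
        then obtain M1 M2 where "\<forall>w\<in>A. length w < M1" "\<forall>w\<in>B. length w < M2" unfolding fin_def by auto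
        then have "\<forall>w\<in>lconc A B. length w < M1 + M2" unfolding lconc_def
          by (auto simp: add_strict_mono)
        then show ?thesis unfolding fin_def by blast
      qed
    qed
  qed
qed

definition walk :: "(nat \<Rightarrow> unit \<Rightarrow> nat \<Rightarrow> bool) \<Rightarrow> nat \<Rightarrow> nat \<Rightarrow> nat \<Rightarrow> bool" where
  "walk d p m r \<longleftrightarrow> nfa_path d p (replicate m ()) r"

lemma walk_0[simp]: "walk d p 0 r \<longleftrightarrow> p = r"
  unfolding walk_def by (auto intro: nfa_path.intros elim: nfa_path.cases)

lemma walk_Suc: "walk d p (Suc m) r \<longleftrightarrow> (\<exists>s. d p () s \<and> walk d s m r)"
  unfolding walk_def by (auto intro: nfa_path.intros elim: nfa_path.cases)

lemma walk_add: "walk d p (a + b) r \<longleftrightarrow> (\<exists>s. walk d p a s \<and> walk d s b r)"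
  by (induction a arbitrary: p) (auto simp: walk_Suc)

lemma walk_trans: "walk d p a s \<Longrightarrow> walk d s b r \<Longrightarrow> walk d p (a + b) r"
  using walk_add by blast

lemma walk_fun: "walk d p m r \<longleftrightarrow> (\<exists>f. f 0 = p \<and> f m = r \<and> (\<forall>i<m. d (f i) () (f (Suc i))))"
proof (induction m arbitrary: r)
  case 0
  then show ?case by auto
next
  case (Suc m)
  have "walk d p (Suc m) r \<longleftrightarrow> (\<exists>s. walk d p m s \<and> d s () r)"
    using walk_add[of d p m 1 r] by (simp add: walk_Suc)
  also have "\<dots> \<longleftrightarrow> (\<exists>f. f 0 = p \<and> f (Suc m) = r \<and> (\<forall>i<Suc m. d (f i) () (f (Suc i))))"
  proof
    assume "\<exists>s. walk d p m s \<and> d s () r"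
    then obtain s f where f: "f 0 = p" "f m = s" "\<forall>i<m. d (f i) () (f (Suc i))" "d s () r"
      using Suc by blast
    let ?g = "f(Suc m := r)"
    have "?g 0 = p" "?g (Suc m) = r" using f by auto
    moreover have "\<forall>i<Suc m. d (?g i) () (?g (Suc i))"
      using f by (auto simp: less_Suc_eq)
    ultimately show "\<exists>f. f 0 = p \<and> f (Suc m) = r \<and> (\<forall>i<Suc m. d (f i) () (f (Suc i)))" by blast
  next
    assume "\<exists>f. f 0 = p \<and> f (Suc m) = r \<and> (\<forall>i<Suc m. d (f i) () (f (Suc i)))"
    then obtain f where f: "f 0 = p" "f (Suc m) = r" "\<forall>i<Suc m. d (f i) () (f (Suc i))" by blast
    have "walk d p m (f m)" using Suc f by auto
    moreover have "d (f m) () r" using f by auto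
    ultimately show "\<exists>s. walk d p m s \<and> d s () r" by blast
  qed
  finally show ?case .
qed

lemma walk_cycle:
  assumes nfa: "is_nfa Q q0 d F" and w: "walk d p m r" and m: "card Q \<le> m"
  shows "\<exists>a l b s. 0 < l \<and> a + l \<le> card Q \<and> a + l + b = m \<and>
           walk d p a s \<and> walk d s l s \<and> walk d s b r"
proof -
  obtain f where f: "f 0 = p" "f m = r" "\<forall>i<m. d (f i) () (f (Suc i))"
    using w walk_fun by blast
  have fin: "finite Q" and dQ: "\<forall>q x p. d q x p \<longrightarrow> q \<in> Q \<and> p \<in> Q"
    using nfa unfolding is_nfa_def by auto
  have "card Q > 0" using nfa unfolding is_nfa_def by (auto simp: card_gt_0_iff)
  then have m0: "m > 0" using m by simp
  have inQ: "f i \<in> Q" if "i \<le> m" for i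
  proof (cases "i < m")
    case True
    then show ?thesis using f dQ by blast
  next
    case False
    then have "i = Suc (i - 1)" "i - 1 < m" using that m0 by auto
    then show ?thesis using f dQ by metis
  qed
  have sub: "f ` {0..card Q} \<subseteq> Q" using inQ m by auto
  have "\<not> inj_on f {0..card Q}"
  proof
    assume "inj_on f {0..card Q}"
    then have "card {0..card Q} \<le> card Q" using card_inj_on_le[OF _ sub fin] by blast
    then show False by simp
  qed
  then obtain i j where ij: "i \<le> card Q" "j \<le> card Q" "i \<noteq> j" "f i = f j"
    unfolding inj_on_def by auto
  then obtain a c where ac: "a < c" "c \<le> card Q" "f a = f c"
    by (metis linorder_neqE_nat)
  have w1: "walk d p a (f a)" unfolding walk_fun using f ac m
    by (intro exI[of _ f]) auto
  have w2: "walk d (f a) (c - a) (f a)" unfolding walk_fun using f ac m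
    by (intro exI[of _ "\<lambda>k. f (a + k)"]) auto
  have w3: "walk d (f a) (m - c) r" unfolding walk_fun using f ac m
    by (intro exI[of _ "\<lambda>k. f (c + k)"]) (auto simp: add.commute)
  show ?thesis
    by (rule exI[of _ a], rule exI[of _ "c - a"], rule exI[of _ "m - c"], rule exI[of _ "f a"])
       (use ac m w1 w2 w3 in auto)
qed

lemma walk_pump: "walk d s l s \<Longrightarrow> walk d s (x * l) s"
  by (induction x) (auto intro: walk_trans)


lemma add_mod_cancel_aux: "(x::nat) \<le> y \<Longrightarrow> (x + e) mod l = (y + e) mod l \<Longrightarrow> x mod l = y mod l"
proof -
  assume "x \<le> y" "(x + e) mod l = (y + e) mod l"
  then have "l dvd (y + e) - (x + e)" using mod_eq_dvd_iff_nat[of "x+e" "y+e" l] by simp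
  then have "l dvd y - x" by simp
  then show ?thesis using mod_eq_dvd_iff_nat[of x y l] \<open>x \<le> y\<close> by simp
qed

lemma inj_add_mod: "inj_on (\<lambda>x::nat. (x + e) mod l) {..<l}"
proof (rule inj_onI)
  fix x y assume xy: "x \<in> {..<l}" "y \<in> {..<l}" "(x + e) mod l = (y + e) mod l"
  then have "x mod l = y mod l"
  proof (cases "x \<le> y")
    case True
    then show ?thesis using add_mod_cancel_aux[of x y e l] xy by simp
  next
    case False
    then show ?thesis using add_mod_cancel_aux[of y x e l] xy by simp
  qed
  then show "x = y" using xy by simp
qed

lemma shrink_claim:
  assumes nfa: "is_nfa Q q0 d F" and l: "0 < l"
  shows "walk d p m r \<Longrightarrow> k * card Q \<le> m \<Longrightarrow>
    \<exists>D. 0 \<in> D \<and> (\<forall>x\<in>D. x \<le> m \<and> walk d p (m - x) r) \<and>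
        ((\<exists>x\<in>D. 0 < x \<and> l dvd x) \<or> k + 1 \<le> card ((\<lambda>x. x mod l) ` D))"
proof (induction k arbitrary: p m)
  case 0
  then show ?case by (intro exI[of _ "{0}"]) auto
next
  case (Suc k)
  let ?n = "card Q"
  have "walk d p (?n + (m - ?n)) r" using Suc.prems by simp
  then obtain s where ws: "walk d p ?n s" and wr: "walk d s (m - ?n) r"
    unfolding walk_add by blast
  obtain a e b q where c: "0 < e" "a + e \<le> ?n" "a + e + b = ?n"
     "walk d p a q" "walk d q e q" "walk d q b s"
    using walk_cycle[OF nfa ws] by blast
  have wshort: "walk d p (a + b) s" using walk_trans[OF c(4) c(6)] .
  have "k * ?n \<le> m - ?n" using Suc.prems by simp
  from Suc.IH[OF wr this] obtain D' where D': "0 \<in> D'"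
    "\<forall>x\<in>D'. x \<le> m - ?n \<and> walk d s (m - ?n - x) r"
    "(\<exists>x\<in>D'. 0 < x \<and> l dvd x) \<or> k + 1 \<le> card ((\<lambda>x. x mod l) ` D')" by blast
  define D where "D = D' \<union> (\<lambda>x. x + e) ` D'"
  have mn: "?n \<le> m" using Suc.prems by simp
  have P1: "0 \<in> D" using D' D_def by auto
  have P2: "\<forall>x\<in>D. x \<le> m \<and> walk d p (m - x) r"
  proof
    fix x assume "x \<in> D"
    then consider "x \<in> D'" | y where "y \<in> D'" "x = y + e" unfolding D_def by auto
    then show "x \<le> m \<and> walk d p (m - x) r"
    proof cases
      case 1
      then have "x \<le> m - ?n" "walk d s (m - ?n - x) r" using D' by auto
      moreover have "m - x = ?n + (m - ?n - x)" using \<open>x \<le> m - ?n\<close> mn by simp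
      ultimately show ?thesis using walk_trans[OF ws, of "m - ?n - x" r] mn by auto
    next
      case 2
      then have "y \<le> m - ?n" "walk d s (m - ?n - y) r" using D' by auto
      moreover have "m - x = (a + b) + (m - ?n - y)" using \<open>y \<le> m - ?n\<close> mn c 2 by simp
      moreover have "x \<le> m" using \<open>y \<le> m - ?n\<close> mn c 2 by simp
      ultimately show ?thesis using walk_trans[OF wshort, of "m - ?n - y" r] by auto
    qed
  qed
  show ?case
  proof (cases "(\<exists>x\<in>D'. 0 < x \<and> l dvd x) \<or> (\<exists>x\<in>D'. l dvd (x + e))")
    case True
    then have "\<exists>x\<in>D. 0 < x \<and> l dvd x" unfolding D_def using c by auto
    then show ?thesis using P1 P2 by blast
  next
    case False
    then have cardR': "k + 1 \<le> card ((\<lambda>x. x mod l) ` D')" using D' by blast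
    let ?R' = "(\<lambda>x. x mod l) ` D'"
    let ?g = "\<lambda>x::nat. (x + e) mod l"
    have R'sub: "?R' \<subseteq> {..<l}" using l by auto
    have finR': "finite ?R'" using R'sub finite_subset by blast
    have img: "(\<lambda>x. x mod l) ` ((\<lambda>x. x + e) ` D') = ?g ` ?R'"
      by (auto simp: image_image mod_add_left_eq)
    have RD: "(\<lambda>x. x mod l) ` D = ?R' \<union> ?g ` ?R'"
      unfolding D_def image_Un img ..
    have "\<not> ?g ` ?R' \<subseteq> ?R'"
    proof
      assume sub: "?g ` ?R' \<subseteq> ?R'"
      have "card (?g ` ?R') = card ?R'"
        using card_image inj_on_subset[OF inj_add_mod R'sub] by blast
      then have eqR: "?g ` ?R' = ?R'" using card_subset_eq[OF finR' sub] by blast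
      have zR: "0 \<in> ?R'" using imageI[OF D'(1), of "\<lambda>x. x mod l"] by simp
      have "0 \<in> ?g ` ?R'" using zR eqR by argo
      then obtain z where z1: "0 = ?g z" and z2: "z \<in> ?R'" by (rule imageE)
      from z2 obtain x where x1: "z = x mod l" and x2: "x \<in> D'" by (rule imageE)
      have "x \<in> D'" "(x mod l + e) mod l = 0" using z1 x1 x2 by simp_all
      then have "l dvd (x + e)" by (simp add: mod_add_left_eq dvd_eq_mod_eq_0)
      then show False using False \<open>x \<in> D'\<close> by blast
    qed
    then obtain y where y: "y \<in> ?g ` ?R'" "y \<notin> ?R'" by blast
    have finR: "finite ((\<lambda>x. x mod l) ` D)" using RD finR' by simp
    have "insert y ?R' \<subseteq> (\<lambda>x. x mod l) ` D" using RD y by blast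
    then have "card (insert y ?R') \<le> card ((\<lambda>x. x mod l) ` D)" using card_mono finR by blast
    moreover have "card (insert y ?R') = card ?R' + 1" using y finR' by simp
    ultimately have "Suc k + 1 \<le> card ((\<lambda>x. x mod l) ` D)" using cardR' by simp
    then show ?thesis using P1 P2 by blast
  qed
qed


lemma shrink:
  assumes nfa: "is_nfa Q q0 d F" and l: "0 < l" and w: "walk d p m r" and m: "l * card Q \<le> m"
  shows "\<exists>m'<m. walk d p m' r \<and> l dvd (m - m')"
proof -
  obtain D where D: "0 \<in> D" "\<forall>x\<in>D. x \<le> m \<and> walk d p (m - x) r"
    "(\<exists>x\<in>D. 0 < x \<and> l dvd x) \<or> l + 1 \<le> card ((\<lambda>x. x mod l) ` D)"
    using shrink_claim[OF nfa l w m] by blast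
  have "(\<lambda>x. x mod l) ` D \<subseteq> {..<l}" using l by auto
  then have "card ((\<lambda>x. x mod l) ` D) \<le> l" using card_mono[of "{..<l}"] by fastforce
  then obtain x where "x \<in> D" "0 < x" "l dvd x" using D by auto
  then show ?thesis using D by (intro exI[of _ "m - x"]) auto
qed

lemma reduce:
  assumes nfa: "is_nfa Q q0 d F" and l: "0 < l"
  shows "walk d p m r \<Longrightarrow> \<exists>m'. m' \<le> m \<and> m' < l * card Q \<and> l dvd (m - m') \<and> walk d p m' r"
proof (induction m rule: less_induct)
  case (less m)
  show ?case
  proof (cases "m < l * card Q")
    case True
    then show ?thesis using less.prems by (intro exI[of _ m]) auto
  next
    case False
    then obtain m1 where m1: "m1 < m" "walk d p m1 r" "l dvd (m - m1)"
      using shrink[OF nfa l less.prems] by auto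
    then obtain m' where m': "m' \<le> m1" "m' < l * card Q" "l dvd (m1 - m')" "walk d p m' r"
      using less.IH by blast
    have "m - m' = (m - m1) + (m1 - m')" using m1 m' by simp
    then have "l dvd (m - m')" using m1 m' by (metis dvd_add)
    then show ?thesis using m1 m' by (intro exI[of _ m']) auto
  qed
qed

lemma lang_walk: "w \<in> nfa_lang q0 d F \<longleftrightarrow> (\<exists>f\<in>F. walk d q0 (length w) f)"
  unfolding nfa_lang_def walk_def by (subst (2) unit_list_eq) auto

lemma cof_case:
  assumes nfa: "is_nfa Q q0 d F" and c: "cof (nfa_lang q0 d F)"
    and t: "card Q * card Q + card Q \<le> t"
  shows "replicate t () \<in> nfa_lang q0 d F"
proof -
  let ?n = "card Q"
  obtain M where M: "\<forall>w. M \<le> length w \<longrightarrow> w \<in> nfa_lang q0 d F" using c unfolding cof_def by auto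
  obtain MF where MF: "MF = M * fact ?n" by blast
  have MMF: "M \<le> MF" unfolding MF
    by (metis fact_ge_1 mult.commute mult_le_mono2 nat_mult_1_right)
  have dvdMF: "l dvd MF" if "0 < l" "l \<le> ?n" for l
  proof -
    have "l dvd (fact ?n :: nat)" using dvd_fact[of l ?n] that by simp
    then show ?thesis unfolding MF by (rule dvd_mult)
  qed
  obtain T where T: "T = t + MF" by blast
  have "M \<le> T" using MMF T by simp
  then have "replicate T () \<in> nfa_lang q0 d F" using M by simp
  then obtain f where f: "f \<in> F" "walk d q0 T f" unfolding lang_walk by auto
  have nT: "?n \<le> T" using t T by simp
  have "T = ?n + (T - ?n)" using nT by simp
  then have "walk d q0 (?n + (T - ?n)) f" using f(2) by simp
  then obtain s where s1: "walk d q0 ?n s" and s2: "walk d s (T - ?n) f"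
    unfolding walk_add by blast
  obtain a l b q where c: "0 < l" "a + l \<le> ?n" "a + l + b = ?n"
     "walk d q0 a q" "walk d q l q" "walk d q b s"
    using walk_cycle[OF nfa s1] by blast
  have wr: "walk d q (b + (T - ?n)) f" using walk_trans[OF c(6) s2] .
  obtain m' where m': "m' \<le> b + (T - ?n)" "m' < l * ?n" "l dvd (b + (T - ?n) - m')" "walk d q m' f"
    using reduce[OF nfa c(1) wr] by blast
  have ln: "l \<le> ?n" using c by simp
  have "l * ?n \<le> ?n * ?n" using ln by simp
  then have le: "a + m' \<le> t" using m' c t by linarith
  obtain R where R: "T = ?n + R" using nT le_iff_add by blast
  then have TR: "T - ?n = R" by simp
  have rho: "b + R + a + l = t + MF" using R c(3) T by simp
  obtain u where u: "t = a + m' + u" using le le_iff_add by blast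
  obtain v where v: "b + R = m' + v" using m'(1) le_iff_add unfolding TR by blast
  then have vv: "b + R - m' = v" by simp
  have "v + l = u + MF" using v rho u by linarith
  then have eq0: "(b + R - m') + l = u + MF" unfolding vv by simp
  have eq: "(b + (T - ?n) - m') + l = (t - (a + m')) + MF"
    using eq0 u unfolding TR by simp
  have lMF: "l dvd MF" using dvdMF[OF c(1) ln] .
  have "l dvd (b + (T - ?n) - m') + l" using m'(3) by simp
  then have "l dvd (t - (a + m')) + MF" unfolding eq .
  then have "l dvd t - (a + m')" using lMF
    by (metis dvd_add_left_iff add.commute)
  then obtain x where x: "t - (a + m') = x * l" by (metis dvd_def mult.commute)
  have px: "walk d q (x * l) q" using walk_pump c by blast
  have "walk d q0 (a + (x * l + m')) f" using walk_trans[OF c(4) walk_trans[OF px m'(4)]] .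
  moreover have "a + (x * l + m') = t" using x le by simp
  ultimately show ?thesis unfolding lang_walk using f by auto
qed

lemma fin_case:
  assumes nfa: "is_nfa Q q0 d F" and fi: "fin (nfa_lang q0 d F)" and t: "card Q \<le> t"
  shows "replicate t () \<notin> nfa_lang q0 d F"
proof
  assume "replicate t () \<in> nfa_lang q0 d F"
  then obtain f where f: "f \<in> F" "walk d q0 t f" unfolding lang_walk by auto
  obtain M where M: "\<forall>w\<in>nfa_lang q0 d F. length w < M" using fi unfolding fin_def by auto
  obtain a l b q where c: "0 < l" "a + l + b = t"
     "walk d q0 a q" "walk d q l q" "walk d q b f"
    using walk_cycle[OF nfa f(2) t] by blast
  have px: "walk d q (M * l) q" using walk_pump c by blast
  have "walk d q0 (a + (M * l + b)) f" using walk_trans[OF c(3) walk_trans[OF px c(5)]] .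
  then have "replicate (a + (M * l + b)) () \<in> nfa_lang q0 d F" unfolding lang_walk using f by auto
  then have "a + (M * l + b) < M" using M by fastforce
  moreover have "M \<le> M * l" using c by simp
  ultimately show False by simp
qed

theorem lemma20:
  "\<exists>c::real. \<forall>(L::uword set) Q q0 delta F.
     L \<in> star_free \<longrightarrow> is_nfa Q q0 delta F \<longrightarrow> nfa_lang q0 delta F = L \<longrightarrow>
     (\<exists>N::nat. real N \<le> c * (real (card Q))^2 \<and>
        (\<forall>k::nat. replicate N () \<in> L \<longleftrightarrow> replicate (N + k) () \<in> L))"
proof (rule exI[where x="2::real"], intro allI impI)
  fix L Q q0 delta F
  assume sf: "L \<in> star_free" and nfa: "is_nfa Q q0 delta F" and lang: "nfa_lang q0 delta F = L"
  let ?n = "card Q"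
  have n1: "1 \<le> ?n" using nfa unfolding is_nfa_def by (auto simp: Suc_le_eq card_gt_0_iff)
  have nn: "?n \<le> ?n * ?n" using n1 by simp
  from sf_fin_cof[OF sf] show "\<exists>N::nat. real N \<le> 2 * (real ?n)^2 \<and>
        (\<forall>k::nat. replicate N () \<in> L \<longleftrightarrow> replicate (N + k) () \<in> L)"
  proof
    assume "fin L"
    then have "\<forall>k. replicate (?n + k) () \<notin> L" using fin_case[OF nfa] lang by auto
    moreover have "real ?n \<le> 2 * (real ?n)^2"
    proof -
      have "?n \<le> 2 * ?n^2" using nn by (simp add: power2_eq_square)
      then show ?thesis by (metis of_nat_le_iff of_nat_mult of_nat_power of_nat_numeral)
    qed
    ultimately show ?thesis by (intro exI[of _ ?n]) (metis add_0_right)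
  next
    assume "cof L"
    then have "\<forall>k. replicate (?n * ?n + ?n + k) () \<in> L" using cof_case[OF nfa] lang by auto
    moreover have "real (?n * ?n + ?n) \<le> 2 * (real ?n)^2"
    proof -
      have "?n * ?n + ?n \<le> 2 * ?n^2" using nn by (simp add: power2_eq_square)
      then show ?thesis by (metis of_nat_le_iff of_nat_mult of_nat_power of_nat_numeral)
    qed
    ultimately show ?thesis by (intro exI[of _ "?n * ?n + ?n"]) (metis add_0_right)
  qed
qed

end
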